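(* Assume the standing setting below, fix $\nu_1,\nu_2,\nu_3\in(0,\infty)$, $0<\alpha_{\max}<\infty$, and let $\bar{\mathcal{R}}(c,s)=\mathcal{R}_c(c)+\nu_1\mathcal{R}_s(s)+\frac{\nu_2}{2}\|s-s_{\mathrm{mod}}\|^2+\frac{\nu_3}{2}\|P(s)-s_{\mathrm{calib}}\|^2$. Let $(c^\ast,s^\ast)$ be an $\bar{\mathcal{R}}$-minimizing solution (a minimizer of $\bar{\mathcal{R}}$ over $\{(c,s):B(c,s)=u^\ast\}$), $u^\ast=B(c^\ast,s^\ast)$, and $u_\delta\in Z$ with $\|u^\ast-u_\delta\|\le\delta$. For $0<\alpha\le\alpha_{\max}$ let $(c^\alpha,s^\alpha)$ be a minimizer of $J^{u_\delta}_{\alpha,\nu_1\alpha,\nu_2\alpha,\nu_3\alpha}$. Suppose that there exist $\kappa_1\in[0,1)$, $\kappa_2\ge0$ and $\xi^\ast=(\xi_{c^\ast},\xi_{s^\ast})\in\partial\bar{\mathcal{R}}(c^\ast,s^\ast)$ such that, for all $(\delta,\alpha)$ considered, $$\langle\xi^\ast,(c^\ast-c,s^\ast-s)\rangle\le\kappa_1D^{\xi^\ast}_{\bar{\mathcal{R}}}((c,s),(c^\ast,s^\ast))+\kappa_2\|B(c,s)-B(c^\ast,s^\ast)\|$$ for all $(c,s)$ with $J^{u_\delta}_{\alpha_{\max},\alpha_{\max}\nu_1,\alpha_{\max}\nu_2,\alpha_{\max}\nu_3}(c,s)\le M$, where $M>\alpha_{\max}(\bar{\mathcal{R}}(c^\ast,s^\ast)+\delta^2/\alpha)$.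 If $\alpha\sim\delta$ (i.e., $m\delta\le\alpha\le M'\delta$ for constants $0<m\le M'$), then as $\delta\to0$ $$D^{\xi^\ast}_{\bar{\mathcal{R}}}((c^\alpha,s^\alpha),(c^\ast,s^\ast))=\mathcal{O}(\delta),\qquad\|B(c^\alpha,s^\alpha)-B(c^\ast,s^\ast)\|=\mathcal{O}(\delta).$$
   Context: Standing setting: $X,Y,Z$ are Hilbert spaces; $X\times Y$ carries the inner product $\langle (c_1,s_1),(c_2,s_2)\rangle=\langle c_1,c_2\rangle_X+\langle s_1,s_2\rangle_Y$. $B:X\times Y\to Z$ is bilinear, satisfies $\|B(c,s)\|_Z\le C\|c\|_X\|s\|_Y$ for some $C>0$, and is sequentially weak-weak continuous. $Y_n\subset Y$ is a finite-dimensional subspace, $P:Y\to Y_n$ is linear and bounded, $s_{\mathrm{calib}}\in Y_n$, $s_{\mathrm{mod}}\in Y$. $\mathcal{R}_c:X\to[0,\infty)$ and $\mathcal{R}_s:Y\to[0,\infty)$ are proper, convex and weakly lower semi-continuous. For $u\in Z$: $J^{u}_{\alpha,\beta,\gamma,\mu}(c,s)=\frac12\|B(c,s)-u\|^2+\frac{\gamma}{2}\|s-s_{\mathrm{mod}}\|^2+\frac{\mu}{2}\|P(s)-s_{\mathrm{calib}}\|^2+\alpha\mathcal{R}_c(c)+\beta\mathcal{R}_s(s)$. For a convex functional $\mathcal{R}$ and $\xi\in\partial\mathcal{R}(x^\ast)$, the Bregman distance is $D^{\xi}_{\mathcal{R}}(x,x^\ast)=\mathcal{R}(x)-\mathcal{R}(x^\ast)-\langle\xi,x-x^\ast\rangle$.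 *)

theory Defs
  imports "HOL-Analysis.Analysis" "HOL-Library.Landau_Symbols"
begin

definition weak_conv :: "(nat \<Rightarrow> 'a::real_inner) \<Rightarrow> 'a \<Rightarrow> bool" where
  "weak_conv xs x \<longleftrightarrow> (\<forall>v. (\<lambda>n. inner (xs n) v) \<longlonglongrightarrow> inner x v)"

definition weakly_lsc :: "('a::real_inner \<Rightarrow> real) \<Rightarrow> bool" where
  "weakly_lsc f \<longleftrightarrow>
     (\<forall>xs x. weak_conv xs x \<longrightarrow> ereal (f x) \<le> liminf (\<lambda>n. ereal (f (xs n))))"

definition seq_weak_weak_cont :: "('x::real_inner \<Rightarrow> 'y::real_inner \<Rightarrow> 'z::real_inner) \<Rightarrow> bool" where
  "seq_weak_weak_cont B \<longleftrightarrow>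
     (\<forall>cs ss c s. weak_conv (\<lambda>n. (cs n, ss n)) (c, s)
        \<longrightarrow> weak_conv (\<lambda>n. B (cs n) (ss n)) (B c s))"

definition fin_dim_subspace :: "'a::real_vector set \<Rightarrow> bool" where
  "fin_dim_subspace V \<longleftrightarrow> subspace V \<and> (\<exists>S. finite S \<and> span S = V)"

definition Jfun ::
  "('x::real_inner \<Rightarrow> 'y::real_inner \<Rightarrow> 'z::real_inner) \<Rightarrow> ('y \<Rightarrow> 'y) \<Rightarrow> 'y \<Rightarrow> 'y
   \<Rightarrow> ('x \<Rightarrow> real) \<Rightarrow> ('y \<Rightarrow> real) \<Rightarrow> 'z \<Rightarrow> real \<Rightarrow> real \<Rightarrow> real \<Rightarrow> real
   \<Rightarrow> 'x \<Rightarrow> 'y \<Rightarrow> real" where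
  "Jfun B P smod scalib Rc Rs u \<alpha> \<beta> \<gamma> \<mu> c s =
     (1/2) * (norm (B c s - u))\<^sup>2 + (\<gamma>/2) * (norm (s - smod))\<^sup>2
     + (\<mu>/2) * (norm (P s - scalib))\<^sup>2 + \<alpha> * Rc c + \<beta> * Rs s"

definition Rbar ::
  "('y::real_inner \<Rightarrow> 'y) \<Rightarrow> 'y \<Rightarrow> 'y \<Rightarrow> ('x::real_inner \<Rightarrow> real) \<Rightarrow> ('y \<Rightarrow> real)
   \<Rightarrow> real \<Rightarrow> real \<Rightarrow> real \<Rightarrow> 'x \<times> 'y \<Rightarrow> real" where
  "Rbar P smod scalib Rc Rs \<nu>1 \<nu>2 \<nu>3 cs =
     Rc (fst cs) + \<nu>1 * Rs (snd cs) + (\<nu>2/2) * (norm (snd cs - smod))\<^sup>2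
     + (\<nu>3/2) * (norm (P (snd cs) - scalib))\<^sup>2"

definition subdiff :: "('a::real_inner \<Rightarrow> real) \<Rightarrow> 'a \<Rightarrow> 'a set" where
  "subdiff R x = {\<xi>. \<forall>y. R y \<ge> R x + inner \<xi> (y - x)}"

definition bregman :: "('a::real_inner \<Rightarrow> real) \<Rightarrow> 'a \<Rightarrow> 'a \<Rightarrow> 'a \<Rightarrow> real" where
  "bregman R \<xi> x xstar = R x - R xstar - inner \<xi> (x - xstar)"

end

theory Submission
  imports Defs
begin


lemma core_real:
  fixes r \<delta> a D k1 k2 e :: real
  assumes "0 \<le> r" "0 < \<delta>" "0 < a" "0 \<le> D" "0 \<le> k1" "k1 < 1" "0 \<le> k2"
    and "e \<le> r + \<delta>"
    and main: "r^2/2 + a*(1-k1)*D \<le> \<delta>^2/2 + a*k2*e"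
  shows "e \<le> 2*a*k2 + 2*\<delta> \<and> a*(1-k1)*D \<le> \<delta>^2/2 + a*k2*(2*a*k2+2*\<delta>)"
proof -
  have p: "0 \<le> a*(1-k1)*D" using assms by simp
  have "a*k2*e \<le> a*k2*(r+\<delta>)" using assms by (simp add: mult_left_mono)
  hence h: "r^2/2 \<le> \<delta>^2/2 + a*k2*(r+\<delta>)" using main p by linarith
  have "(r - a*k2)^2 \<le> (a*k2+\<delta>)^2" using h by (simp add: power2_eq_square algebra_simps)
  hence "\<bar>r - a*k2\<bar> \<le> \<bar>a*k2+\<delta>\<bar>" using abs_le_square_iff by blast
  hence r: "r \<le> 2*a*k2+\<delta>" using assms by (simp add: abs_le_iff)
  have e: "e \<le> 2*a*k2 + 2*\<delta>" using r assms by linarith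
  have "a*k2*e \<le> a*k2*(2*a*k2+2*\<delta>)" using e assms by (simp add: mult_left_mono)
  moreover have "0 \<le> r^2/2" by simp
  ultimately show ?thesis using e main by linarith
qed

theorem mainTheorem5:
  fixes B :: "'x::{real_inner,complete_space} \<Rightarrow> 'y::{real_inner,complete_space} \<Rightarrow> 'z::{real_inner,complete_space}"
    and C :: real
    and Yn :: "'y set" and P :: "'y \<Rightarrow> 'y" and scalib smod :: 'y
    and Rc :: "'x \<Rightarrow> real" and Rs :: "'y \<Rightarrow> real"
    and \<nu>1 \<nu>2 \<nu>3 \<alpha>max :: real
    and cstar :: 'x and sstar :: 'y
    and \<delta>0 m M' \<kappa>1 \<kappa>2 :: real
    and ud :: "real \<Rightarrow> 'z" and \<alpha> :: "real \<Rightarrow> real" and M :: "real \<Rightarrow> real"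
    and ca :: "real \<Rightarrow> 'x" and sa :: "real \<Rightarrow> 'y"
    and \<xi>star :: "'x \<times> 'y"
  defines "RB \<equiv> Rbar P smod scalib Rc Rs \<nu>1 \<nu>2 \<nu>3"
  assumes B_bilinear: "bilinear B"
    and C_pos: "C > 0"
    and B_bound: "\<forall>c s. norm (B c s) \<le> C * norm c * norm s"
    and B_weak: "seq_weak_weak_cont B"
    and Yn: "fin_dim_subspace Yn"
    and P_lin: "bounded_linear P" and P_range: "\<forall>y. P y \<in> Yn"
    and scalib_in: "scalib \<in> Yn"
    and Rc_nonneg: "\<forall>c. Rc c \<ge> 0" and Rc_convex: "convex_on UNIV Rc" and Rc_lsc: "weakly_lsc Rc"
    and Rs_nonneg: "\<forall>s. Rs s \<ge> 0" and Rs_convex: "convex_on UNIV Rs" and Rs_lsc: "weakly_lsc Rs"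
    and nu_pos: "\<nu>1 > 0" "\<nu>2 > 0" "\<nu>3 > 0"
    and amax_pos: "\<alpha>max > 0"
    and Rmin: "\<forall>c s. B c s = B cstar sstar \<longrightarrow> RB (cstar, sstar) \<le> RB (c, s)"
    and \<delta>0_pos: "\<delta>0 > 0"
    and noise: "\<forall>\<delta>. 0 < \<delta> \<and> \<delta> < \<delta>0 \<longrightarrow> norm (B cstar sstar - ud \<delta>) \<le> \<delta>"
    and alpha_range: "\<forall>\<delta>. 0 < \<delta> \<and> \<delta> < \<delta>0 \<longrightarrow> 0 < \<alpha> \<delta> \<and> \<alpha> \<delta> \<le> \<alpha>max"
    and alpha_sim: "0 < m" "m \<le> M'"
      "\<forall>\<delta>. 0 < \<delta> \<and> \<delta> < \<delta>0 \<longrightarrow> m * \<delta> \<le> \<alpha> \<delta> \<and> \<alpha> \<delta> \<le> M' * \<delta>"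
    and minimizer: "\<forall>\<delta>. 0 < \<delta> \<and> \<delta> < \<delta>0 \<longrightarrow> (\<forall>c s.
        Jfun B P smod scalib Rc Rs (ud \<delta>) (\<alpha> \<delta>) (\<nu>1 * \<alpha> \<delta>) (\<nu>2 * \<alpha> \<delta>) (\<nu>3 * \<alpha> \<delta>) (ca \<delta>) (sa \<delta>)
        \<le> Jfun B P smod scalib Rc Rs (ud \<delta>) (\<alpha> \<delta>) (\<nu>1 * \<alpha> \<delta>) (\<nu>2 * \<alpha> \<delta>) (\<nu>3 * \<alpha> \<delta>) c s)"
    and kappa: "0 \<le> \<kappa>1" "\<kappa>1 < 1" "0 \<le> \<kappa>2"
    and xi_subdiff: "\<xi>star \<in> subdiff RB (cstar, sstar)"
    and M_bound: "\<forall>\<delta>. 0 < \<delta> \<and> \<delta> < \<delta>0 \<longrightarrow> M \<delta> > \<alpha>max * (RB (cstar, sstar) + \<delta>\<^sup>2 / \<alpha> \<delta>)"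
    and source: "\<forall>\<delta>. 0 < \<delta> \<and> \<delta> < \<delta>0 \<longrightarrow> (\<forall>c s.
        Jfun B P smod scalib Rc Rs (ud \<delta>) \<alpha>max (\<alpha>max * \<nu>1) (\<alpha>max * \<nu>2) (\<alpha>max * \<nu>3) c s \<le> M \<delta>
        \<longrightarrow> inner \<xi>star ((cstar, sstar) - (c, s))
            \<le> \<kappa>1 * bregman RB \<xi>star (c, s) (cstar, sstar) + \<kappa>2 * norm (B c s - B cstar sstar))"
  shows "(\<lambda>\<delta>. bregman RB \<xi>star (ca \<delta>, sa \<delta>) (cstar, sstar)) \<in> O[at_right 0](\<lambda>\<delta>. \<delta>)
     \<and> (\<lambda>\<delta>. norm (B (ca \<delta>) (sa \<delta>) - B cstar sstar)) \<in> O[at_right 0](\<lambda>\<delta>. \<delta>)"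
  proof -
  let ?x = "(cstar, sstar)"
  have Jeq: "Jfun B P smod scalib Rc Rs u a (\<nu>1 * a) (\<nu>2 * a) (\<nu>3 * a) c s
      = (1/2) * (norm (B c s - u))\<^sup>2 + a * RB (c, s)" for u a c s
    unfolding Jfun_def RB_def Rbar_def by (simp add: algebra_simps)
  have Jeq2: "Jfun B P smod scalib Rc Rs u a (a * \<nu>1) (a * \<nu>2) (a * \<nu>3) c s
      = (1/2) * (norm (B c s - u))\<^sup>2 + a * RB (c, s)" for u a c s
    unfolding Jfun_def RB_def Rbar_def by (simp add: algebra_simps)
  have Dnn: "0 \<le> bregman RB \<xi>star y ?x" for y
  proof -
    have "RB y \<ge> RB ?x + inner \<xi>star (y - ?x)" using xi_subdiff unfolding subdiff_def by blast
    thus ?thesis unfolding bregman_def by linarith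
  qed
  define K1 where "K1 = (1/(2*m) + \<kappa>2*(2*M'*\<kappa>2+2)) / (1-\<kappa>1)"
  define K2 where "K2 = 2*M'*\<kappa>2 + 2"
  have pt: "bregman RB \<xi>star (ca \<delta>, sa \<delta>) ?x \<le> K1 * \<delta>
         \<and> norm (B (ca \<delta>) (sa \<delta>) - B cstar sstar) \<le> K2 * \<delta>"
    if d: "0 < \<delta>" "\<delta> < \<delta>0" for \<delta>
  proof -
    define a where "a = \<alpha> \<delta>"
    define c where "c = ca \<delta>"
    define s where "s = sa \<delta>"
    define u where "u = ud \<delta>"
    define r where "r = norm (B c s - u)"
    define e where "e = norm (B c s - B cstar sstar)"
    define D where "D = bregman RB \<xi>star (c, s) ?x"
    have a: "0 < a" "a \<le> \<alpha>max" "m*\<delta> \<le> a" "a \<le> M'*\<delta>"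
      using alpha_range alpha_sim(3) d unfolding a_def by auto
    have nz: "norm (B cstar sstar - u) \<le> \<delta>" using noise d unfolding u_def by auto
    hence nz2: "(norm (B cstar sstar - u))^2 \<le> \<delta>^2" by (simp add: power_mono)
    have "(1/2)*r^2 + a * RB (c,s) \<le> (1/2)*(norm (B cstar sstar - u))^2 + a * RB ?x"
      using minimizer d unfolding Jeq a_def c_def s_def u_def r_def by blast
    hence mn: "(1/2)*r^2 + a * RB (c,s) \<le> (1/2)*\<delta>^2 + a * RB ?x" using nz2 by linarith
    have RBle: "RB (c,s) \<le> RB ?x + \<delta>^2/(2*a)"
    proof -
      have "a * RB (c,s) \<le> (1/2)*\<delta>^2 + a * RB ?x" using mn zero_le_power2[of r] by linarith
      hence "RB (c,s) \<le> ((1/2)*\<delta>^2 + a * RB ?x)/a" using a by (simp add: field_simps)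
      thus ?thesis using a by (simp add: field_simps)
    qed
    have "Jfun B P smod scalib Rc Rs u \<alpha>max (\<alpha>max * \<nu>1) (\<alpha>max * \<nu>2) (\<alpha>max * \<nu>3) c s
        = (1/2)*r^2 + a * RB (c,s) + (\<alpha>max - a) * RB (c,s)"
      unfolding Jeq2 r_def by (simp add: algebra_simps)
    also have "\<dots> \<le> (1/2)*\<delta>^2 + a * RB ?x + (\<alpha>max - a) * (RB ?x + \<delta>^2/(2*a))"
      using mn RBle a by (smt (verit) mult_left_mono)
    also have "\<dots> = \<alpha>max * RB ?x + \<alpha>max * \<delta>^2/(2*a)"
      using a by (simp add: field_simps power2_eq_square)
    also have "\<dots> \<le> \<alpha>max * (RB ?x + \<delta>^2/a)"
      using a amax_pos by (simp add: field_simps)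
    also have "\<dots> < M \<delta>" using M_bound d unfolding a_def by auto
    finally have lev: "Jfun B P smod scalib Rc Rs u \<alpha>max (\<alpha>max * \<nu>1) (\<alpha>max * \<nu>2) (\<alpha>max * \<nu>3) c s \<le> M \<delta>"
      by simp
    have src: "inner \<xi>star (?x - (c, s)) \<le> \<kappa>1 * D + \<kappa>2 * e"
      using source d lev unfolding u_def D_def e_def by blast
    have Deq: "D = RB (c,s) - RB ?x + inner \<xi>star (?x - (c, s))"
    proof -
      have "(c, s) - ?x = - (?x - (c, s))" by simp
      hence "inner \<xi>star ((c, s) - ?x) = - inner \<xi>star (?x - (c, s))"
        by (metis inner_minus_right)
      thus ?thesis unfolding D_def bregman_def by linarith
    qed
    have "(1/2)*r^2 + a * D \<le> (1/2)*\<delta>^2 + a * inner \<xi>star (?x - (c, s))"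
      using mn unfolding Deq by (simp add: algebra_simps)
    also have "\<dots> \<le> (1/2)*\<delta>^2 + a * (\<kappa>1 * D + \<kappa>2 * e)"
      using src a by (simp add: mult_left_mono)
    finally have m2: "r^2/2 + a*(1-\<kappa>1)*D \<le> \<delta>^2/2 + a*\<kappa>2*e"
      by (simp add: algebra_simps)
    have et: "e \<le> r + \<delta>"
    proof -
      have "e \<le> norm (B c s - u) + norm (u - B cstar sstar)"
        unfolding e_def by (rule norm_diff_triangle_le[where y=u]) simp_all
      thus ?thesis using nz unfolding r_def by (simp add: norm_minus_commute)
    qed
    have cr: "e \<le> 2*a*\<kappa>2 + 2*\<delta> \<and> a*(1-\<kappa>1)*D \<le> \<delta>^2/2 + a*\<kappa>2*(2*a*\<kappa>2+2*\<delta>)"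
      by (rule core_real[OF _ d(1) a(1) _ kappa et m2]) (auto simp: r_def D_def Dnn)
    have e2: "e \<le> K2 * \<delta>"
    proof -
      have "2*a*\<kappa>2 \<le> 2*(M'*\<delta>)*\<kappa>2" using a kappa by (simp add: mult_right_mono)
      thus ?thesis using cr unfolding K2_def by (simp add: algebra_simps)
    qed
    have "(1-\<kappa>1)*D \<le> (\<delta>^2/2 + a*\<kappa>2*(2*a*\<kappa>2+2*\<delta>))/a"
      using cr a by (simp add: field_simps)
    also have "\<dots> = \<delta>^2/(2*a) + \<kappa>2*(2*a*\<kappa>2+2*\<delta>)" using a by (simp add: field_simps)
    also have "\<dots> \<le> \<delta>^2/(2*(m*\<delta>)) + \<kappa>2*(2*(M'*\<delta>)*\<kappa>2+2*\<delta>)"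
    proof -
      have "\<delta>^2/(2*a) \<le> \<delta>^2/(2*(m*\<delta>))"
        using a d alpha_sim by (intro divide_left_mono) auto
      moreover have "2*a*\<kappa>2 \<le> 2*(M'*\<delta>)*\<kappa>2" using a kappa by (simp add: mult_right_mono)
      ultimately show ?thesis using kappa by (smt (verit) mult_left_mono)
    qed
    also have "\<dots> = (1/(2*m) + \<kappa>2*(2*M'*\<kappa>2+2)) * \<delta>"
      using d alpha_sim by (simp add: field_simps power2_eq_square)
    finally have "(1-\<kappa>1)*D \<le> (1/(2*m) + \<kappa>2*(2*M'*\<kappa>2+2)) * \<delta>" .
    hence "D \<le> K1 * \<delta>" using kappa unfolding K1_def by (simp add: field_simps)
    thus ?thesis using e2 unfolding D_def e_def c_def s_def by simp
  qed
  have ev: "eventually (\<lambda>\<delta>. 0 < \<delta> \<and> \<delta> < \<delta>0) (at_right (0::real))"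
    using \<delta>0_pos by (auto simp: eventually_at_right_field)
  show ?thesis
  proof
    show "(\<lambda>\<delta>. bregman RB \<xi>star (ca \<delta>, sa \<delta>) ?x) \<in> O[at_right 0](\<lambda>\<delta>. \<delta>)"
      by (rule bigoI[where c=K1], rule eventually_mono[OF ev])
         (use pt Dnn in auto)
    show "(\<lambda>\<delta>. norm (B (ca \<delta>) (sa \<delta>) - B cstar sstar)) \<in> O[at_right 0](\<lambda>\<delta>. \<delta>)"
      by (rule bigoI[where c=K2], rule eventually_mono[OF ev]) (use pt in auto)
  qed
qed

end
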